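(* Let $X$ be a nonempty countable set, $\mathcal D$ a distribution on $X$, $m\ge1$, $\rho$ any cost function on $X$, and $\mu\in\mathscr D^{m,\rho,\mathcal D}_{\mathrm{adaptive}}$. Let $S'\sim\mu$ and let $g$ be any random variable jointly distributed with $S'$ taking values in a finite nonempty set $G$. For $g_0\in G$ with $\Pr[g=g_0]>0$ let $\mathcal D'_{\mathrm{goal}}(g_0)=\mathbb E[\mathrm{Unif}(S')\mid g=g_0]$ (the law of a uniformly random coordinate of $S'$ conditioned on $g=g_0$). Then $$\mathbb E_{g}\Big[\inf_{\mathcal D'\in\mathcal C_\rho(\mathcal D)} d_{\mathrm{TV}}\big(\mathcal D',\mathcal D'_{\mathrm{goal}}(g)\big)\Big]\le\sqrt{\frac{\ln|G|}{2m}}.$$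
   Context: All distributions are discrete. A cost function on $X$ is $\rho:X\times X\to\mathbb R_{\ge0}\cup\{\infty\}$ with $\rho(x,x)=0$. For $S\in X^m$, $\mathcal C_\rho(S)=\{S'\in X^m:\frac1m\sum_i\rho(S_i,S'_i)\le1\}$. For a distribution $\mathcal D$ on $X$, $\mathcal C_\rho(\mathcal D)$ is the set of distributions $\mathcal D'$ on $X$ admitting a coupling of $x\sim\mathcal D$, $x'\sim\mathcal D'$ with $\mathbb E[\rho(x,x')]\le1$. $\mathscr D^{m,\rho,\mathcal D}_{\mathrm{adaptive}}$ is the set of distributions $\mu$ on $X^m$ for which there is a coupling of $S'\sim\mu$ and $S\sim\mathcal D^m$ with $S'\in\mathcal C_\rho(S)$ almost surely. For a tuple $S$, $\mathrm{Unif}(S)$ is the law of a uniformly random coordinate of $S$. *)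

theory Defs
  imports "HOL-Probability.Probability"
begin

definition cost_fun :: "('a \<Rightarrow> 'a \<Rightarrow> ennreal) \<Rightarrow> bool" where
  "cost_fun \<rho> \<longleftrightarrow> (\<forall>x. \<rho> x x = 0)"

definition cost_ball_tuple :: "('a \<Rightarrow> 'a \<Rightarrow> ennreal) \<Rightarrow> 'a list \<Rightarrow> 'a list set" where
  "cost_ball_tuple \<rho> S = {S'. length S' = length S \<and>
      (1 / of_nat (length S)) * (\<Sum>i<length S. \<rho> (S ! i) (S' ! i)) \<le> 1}"

definition cost_ball_dist :: "('a \<Rightarrow> 'a \<Rightarrow> ennreal) \<Rightarrow> 'a pmf \<Rightarrow> 'a pmf set" where
  "cost_ball_dist \<rho> D = {D'. \<exists>c :: ('a \<times> 'a) pmf. map_pmf fst c = D \<and> map_pmf snd c = D' \<and>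
      (\<integral>\<^sup>+ p. \<rho> (fst p) (snd p) \<partial>measure_pmf c) \<le> 1}"

definition adaptive_class :: "nat \<Rightarrow> ('a \<Rightarrow> 'a \<Rightarrow> ennreal) \<Rightarrow> 'a pmf \<Rightarrow> 'a list pmf set" where
  "adaptive_class m \<rho> D = {\<mu>. \<exists>\<nu> :: ('a list \<times> 'a list) pmf.
      map_pmf fst \<nu> = \<mu> \<and> map_pmf snd \<nu> = replicate_pmf m D \<and>
      (\<forall>p \<in> set_pmf \<nu>. fst p \<in> cost_ball_tuple \<rho> (snd p))}"

definition unif_coord :: "'a list \<Rightarrow> 'a pmf" where
  "unif_coord S = map_pmf (\<lambda>i. S ! i) (pmf_of_set {..<length S})"

definition tv_dist :: "'a pmf \<Rightarrow> 'a pmf \<Rightarrow> real" where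
  "tv_dist P Q = (SUP A. \<bar>measure_pmf.prob P A - measure_pmf.prob Q A\<bar>)"

text \<open>D'_goal(g0) = E[Unif(S') | g = g0], for a joint law J of (S', g).\<close>
definition goal_dist :: "('a list \<times> 'g) pmf \<Rightarrow> 'g \<Rightarrow> 'a pmf" where
  "goal_dist J g0 = bind_pmf (cond_pmf J {p. snd p = g0}) (\<lambda>p. unif_coord (fst p))"

end

theory Submission
  imports Defs
begin


lemma pmf_integrable_bounded:
  fixes f :: "_ \<Rightarrow> real"
  assumes "\<And>x. x \<in> set_pmf p \<Longrightarrow> \<bar>f x\<bar> \<le> B"
  shows "integrable (measure_pmf p) f"
  by (rule measure_pmf.integrable_const_bound[where B=B]) (use assms in \<open>auto simp: AE_measure_pmf_iff\<close>)

lemma integral_bind_pmf_bounded: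
  fixes f :: "_ \<Rightarrow> real"
  assumes "\<And>x. \<bar>f x\<bar> \<le> B"
  shows "measure_pmf.expectation (bind_pmf M N) f =
         measure_pmf.expectation M (\<lambda>x. measure_pmf.expectation (N x) f)"
  unfolding measure_pmf_bind
  apply (rule integral_bind[where K="count_space UNIV" and B=B and B'=1])
  using assms apply (auto simp: measure_pmf.emeasure_space_1 measure_pmf_in_subprob_algebra intro!: measure_pmf.finite_measure)
  done

lemma bind_cond_fiber:
  "bind_pmf (map_pmf f p) (\<lambda>x. cond_pmf p {y. f y = x}) = p"
  apply (rule bind_cond_pmf_cancel)
  apply (auto)
  apply (simp add: vimage_def)
  done

lemma hoeff_single:
  fixes l :: real and D :: "'a pmf"
  assumes "l > 0"
  shows "(\<integral>\<^sup>+x. ennreal (exp (l * (indicator B x - measure_pmf.prob D B))) \<partial>measure_pmf D) \<le> ennreal (exp (l^2 / 8))"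
proof -
  have E: "measure_pmf.expectation D (indicator B :: _ \<Rightarrow> real) = measure_pmf.prob D B"
    by simp
  interpret interval_bounded_random_variable "measure_pmf D" "indicator B :: _ \<Rightarrow> real" 0 1
    by unfold_locales auto
  note H = Hoeffdings_lemma_nn_integral[OF assms]
  show ?thesis
    using H unfolding E by simp
qed

lemma nn_integral_prod_replicate:
  fixes g :: "'a \<Rightarrow> real"
  assumes "\<And>x. g x \<ge> 0"
  shows "(\<integral>\<^sup>+xs. ennreal (prod_list (map g xs)) \<partial>measure_pmf (replicate_pmf m D))
          = (\<integral>\<^sup>+x. ennreal (g x) \<partial>measure_pmf D) ^ m"
proof (induction m)
  case 0 then show ?case by simp
next
  case (Suc m)
  have nn: "\<And>xs. prod_list (map g xs) \<ge> 0" using assms by (intro prod_list_nonneg) auto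
  have "(\<integral>\<^sup>+xs. ennreal (prod_list (map g xs)) \<partial>measure_pmf (replicate_pmf (Suc m) D))
     = (\<integral>\<^sup>+x. (\<integral>\<^sup>+xs. ennreal (g x) * ennreal (prod_list (map g xs)) \<partial>measure_pmf (replicate_pmf m D)) \<partial>measure_pmf D)"
    using assms nn by (simp add: ennreal_mult)
  also have "\<dots> = (\<integral>\<^sup>+x. ennreal (g x) * (\<integral>\<^sup>+ x. ennreal (g x) \<partial>measure_pmf D) ^ m \<partial>measure_pmf D)"
    by (simp add: nn_integral_cmult Suc)
  also have "\<dots> = (\<integral>\<^sup>+x. ennreal (g x) \<partial>measure_pmf D) ^ Suc m"
    by (simp add: nn_integral_multc mult.commute)
  finally show ?case .
qed

lemma exp_sum_list:
  fixes c :: real and f :: "_ \<Rightarrow> real"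
  shows "exp (c * sum_list (map f xs)) = prod_list (map (\<lambda>x. exp (c * f x)) xs)"
  by (induction xs) (auto simp: distrib_left exp_add)

lemma abs_sum_list_le:
  fixes f :: "_ \<Rightarrow> real"
  assumes "\<And>x. \<bar>f x\<bar> \<le> 1"
  shows "\<bar>sum_list (map f xs)\<bar> \<le> length xs"
proof (induction xs)
  case (Cons a xs)
  have "\<bar>f a + sum_list (map f xs)\<bar> \<le> \<bar>f a\<bar> + \<bar>sum_list (map f xs)\<bar>" by (rule abs_triangle_ineq)
  then show ?case using Cons assms[of a] by simp
qed simp

definition Zf :: "'a pmf \<Rightarrow> nat \<Rightarrow> 'a set \<Rightarrow> 'a list \<Rightarrow> real" where
  "Zf D m B xs = sum_list (map (\<lambda>x. indicator B x - measure_pmf.prob D B) xs) / m"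

lemma Zf_bound:
  assumes "length xs = m" "m > 0"
  shows "\<bar>Zf D m B xs\<bar> \<le> 1"
proof -
  have "\<bar>sum_list (map (\<lambda>x. indicator B x - measure_pmf.prob D B) xs)\<bar> \<le> length xs"
    by (rule abs_sum_list_le) (auto simp: indicator_def)
  then have "\<bar>sum_list (map (\<lambda>x. indicator B x - measure_pmf.prob D B) xs)\<bar> / real m \<le> real m / real m"
    using assms by (intro divide_right_mono) auto
  then show ?thesis using assms unfolding Zf_def by (simp only: abs_divide abs_of_nat) simp
qed

lemma mgf_Z:
  fixes l :: real
  assumes "l > 0" "m > 0"
  shows "measure_pmf.expectation (replicate_pmf m D) (\<lambda>xs. exp (l * Zf D m B xs)) \<le> exp (l^2 / (8 * m))"
proof -
  let ?g = "\<lambda>x. exp ((l / m) * (indicator B x - measure_pmf.prob D B))"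
  have eq: "exp (l * Zf D m B xs) = prod_list (map ?g xs)" for xs
    unfolding Zf_def exp_sum_list[symmetric] by (simp add: field_simps)
  have "ennreal (measure_pmf.expectation (replicate_pmf m D) (\<lambda>xs. exp (l * Zf D m B xs)))
      = (\<integral>\<^sup>+xs. ennreal (exp (l * Zf D m B xs)) \<partial>measure_pmf (replicate_pmf m D))"
    apply (rule nn_integral_eq_integral[symmetric])
     apply (rule pmf_integrable_bounded[where B="exp l"])
    subgoal for xs
    proof -
      assume "xs \<in> set_pmf (replicate_pmf m D)"
      then have "length xs = m" by (simp add: set_replicate_pmf)
      then have "Zf D m B xs \<le> 1" using Zf_bound[of xs m D B] assms by simp
      then have "l * Zf D m B xs \<le> l * 1" using assms by (intro mult_left_mono) auto
      then show ?thesis by simp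
    qed
    apply simp
    done
  also have "\<dots> = (\<integral>\<^sup>+x. ennreal (?g x) \<partial>measure_pmf D) ^ m"
    unfolding eq by (rule nn_integral_prod_replicate) auto
  also have "\<dots> \<le> ennreal (exp ((l/m)^2 / 8)) ^ m"
    by (intro power_mono hoeff_single) (use assms in auto)
  also have "\<dots> = ennreal (exp ((l/m)^2 / 8) ^ m)"
    by (subst ennreal_power) auto
  also have "exp ((l/m)^2 / 8) ^ m = exp (real m * ((l/m)^2 / 8))"
    by (rule exp_of_nat_mult[symmetric])
  also have "real m * ((l/m)^2 / 8) = l^2 / (8 * m)"
    using assms by (simp add: power2_eq_square field_simps)
  finally have "ennreal (measure_pmf.expectation (replicate_pmf m D) (\<lambda>xs. exp (l * Zf D m B xs)))
     \<le> ennreal (exp (l^2 / (8 * m)))" .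
  then show ?thesis by (subst (asm) ennreal_le_iff) auto
qed



lemma max_bound:
  fixes G :: "'g set" and A :: "'g \<Rightarrow> 'a set" and l :: real
  assumes G: "finite G" "G \<noteq> {}" and l: "l > 0" and m: "m > 0"
  shows "measure_pmf.expectation (replicate_pmf m D) (\<lambda>xs. Max ((\<lambda>h. Zf D m (A h) xs) ` G))
           \<le> ln (real (card G)) / l + l / (8 * m)"
proof -
  define R where "R = replicate_pmf m D"
  define M where "M = (\<lambda>xs. Max ((\<lambda>h. Zf D m (A h) xs) ` G))"
  have Min: "\<exists>h\<in>G. M xs = Zf D m (A h) xs" for xs
  proof -
    have "M xs \<in> (\<lambda>h. Zf D m (A h) xs) ` G" unfolding M_def using G by (intro Max_in) auto
    then show ?thesis by blast
  qed
  have lenR: "xs \<in> set_pmf R \<Longrightarrow> length xs = m" for xs by (simp add: R_def set_replicate_pmf)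
  have Mb: "\<bar>M xs\<bar> \<le> 1" if "xs \<in> set_pmf R" for xs
    using Min[of xs] Zf_bound[OF lenR[OF that] m] by auto
  have intM: "integrable (measure_pmf R) M"
    by (rule pmf_integrable_bounded[where B=1]) (use Mb in auto)
  have expb: "\<bar>exp (l * t)\<bar> \<le> exp l" if "\<bar>t\<bar> \<le> 1" for t
  proof -
    have "l * t \<le> l * 1" using that l by (intro mult_left_mono) auto
    then show ?thesis by simp
  qed
  have intZ: "integrable (measure_pmf R) (\<lambda>xs. exp (l * Zf D m (A h) xs))" for h
    by (rule pmf_integrable_bounded[where B="exp l"]) (use Zf_bound[OF lenR m] expb in blast)
  have intEM: "integrable (measure_pmf R) (\<lambda>xs. exp (l * M xs))"
    by (rule pmf_integrable_bounded[where B="exp l"]) (use Mb expb in blast)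
  have "exp (l * measure_pmf.expectation R M) \<le> measure_pmf.expectation R (\<lambda>xs. exp (l * M xs))"
    by (rule measure_pmf.jensens_inequality[where I=UNIV and q="\<lambda>t. exp (l * t)"])
       (use intM intEM convex_on_exp[of l] l in auto)
  also have "\<dots> \<le> measure_pmf.expectation R (\<lambda>xs. \<Sum>h\<in>G. exp (l * Zf D m (A h) xs))"
  proof (rule integral_mono)
    show "integrable (measure_pmf R) (\<lambda>xs. \<Sum>h\<in>G. exp (l * Zf D m (A h) xs))"
      using intZ by auto
    fix xs
    obtain h where h: "h \<in> G" "M xs = Zf D m (A h) xs" using Min by blast
    show "exp (l * M xs) \<le> (\<Sum>h\<in>G. exp (l * Zf D m (A h) xs))"
      unfolding h(2) by (rule member_le_sum[OF h(1)]) (auto simp: G)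
  qed (rule intEM)
  also have "\<dots> = (\<Sum>h\<in>G. measure_pmf.expectation R (\<lambda>xs. exp (l * Zf D m (A h) xs)))"
    by (rule Bochner_Integration.integral_sum) (use intZ in auto)
  also have "\<dots> \<le> (\<Sum>h\<in>G. exp (l^2 / (8 * m)))"
    unfolding R_def by (intro sum_mono mgf_Z l m)
  also have "\<dots> = real (card G) * exp (l^2 / (8 * m))" by simp
  finally have "l * measure_pmf.expectation R M \<le> ln (real (card G) * exp (l^2 / (8 * m)))"
    using G by (subst ln_ge_iff) (auto simp: card_gt_0_iff)
  also have "\<dots> = ln (real (card G)) + l^2 / (8 * m)"
    using G by (subst ln_mult) (auto simp: card_gt_0_iff)
  finally have "measure_pmf.expectation R M \<le> (ln (real (card G)) + l^2 / (8 * m)) / l"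
    using l by (simp add: field_simps)
  also have "\<dots> = ln (real (card G)) / l + l / (8 * m)"
    using l by (simp add: field_simps power2_eq_square)
  finally show ?thesis unfolding R_def M_def .
qed

lemma opt_lambda:
  fixes E L :: real
  assumes L: "L \<ge> 0" and m: "m > 0" and H: "\<And>l. l > 0 \<Longrightarrow> E \<le> L / l + l / (8 * m)"
  shows "E \<le> sqrt (L / (2 * m))"
proof (cases "L = 0")
  case True
  show ?thesis
  proof (rule ccontr)
    assume "\<not> ?thesis"
    then have E: "E > 0" using True by simp
    have "E \<le> (4 * m * E) / (8 * m)" using H[of "4 * m * E"] E m True by simp
    also have "\<dots> = E / 2" using m by simp
    finally show False using E by simp
  qed
next
  case False
  then have Lp: "L > 0" using L by simp
  define s where "s = sqrt (L / (8 * m))"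
  have s: "s > 0" using Lp m by (simp add: s_def)
  have s2: "s^2 = L / (8 * m)" using Lp m by (simp add: s_def)
  have LL: "L = 8 * m * s^2" using s2 m by (simp add: field_simps)
  have "E \<le> L / (8 * m * s) + (8 * m * s) / (8 * m)" using H[of "8 * m * s"] s m by simp
  also have "\<dots> = 2 * s" using s m unfolding LL by (simp add: power2_eq_square field_simps)
  also have "\<dots> = sqrt (L / (2 * m))"
  proof -
    have "L / (2 * m) = (2 * s)^2" unfolding LL using m by (simp add: power2_eq_square field_simps)
    then have "sqrt (L / (2 * m)) = \<bar>2 * s\<bar>" by (simp only: real_sqrt_abs)
    then show ?thesis using s by simp
  qed
  finally show ?thesis .
qed




lemma meas_count:
  "ennreal (measure_pmf.prob r S) = (\<integral>\<^sup>+x. ennreal (indicator S x * pmf r x) \<partial>count_space UNIV)"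
proof -
  have "ennreal (measure_pmf.prob r S) = emeasure (measure_pmf r) S"
    by (simp add: measure_pmf.emeasure_eq_measure)
  also have "\<dots> = (\<integral>\<^sup>+x. indicator S x \<partial>measure_pmf r)" by simp
  also have "\<dots> = (\<integral>\<^sup>+x. ennreal (pmf r x) * indicator S x \<partial>count_space UNIV)"
    by (rule nn_integral_measure_pmf)
  also have "\<dots> = (\<integral>\<^sup>+x. ennreal (indicator S x * pmf r x) \<partial>count_space UNIV)"
    by (intro nn_integral_cong) (auto simp: indicator_def)
  finally show ?thesis .
qed

lemma count_diff:
  fixes p q :: "'a pmf"
  assumes "\<And>x. x \<in> S \<Longrightarrow> pmf p x \<le> pmf q x"
  shows "(\<integral>\<^sup>+x. ennreal (indicator S x * (pmf q x - pmf p x)) \<partial>count_space UNIV)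
          = ennreal (measure_pmf.prob q S - measure_pmf.prob p S)"
proof -
  let ?L = "(\<integral>\<^sup>+x. ennreal (indicator S x * (pmf q x - pmf p x)) \<partial>count_space UNIV)"
  have "ennreal (measure_pmf.prob q S) = (\<integral>\<^sup>+x. ennreal (indicator S x * (pmf q x - pmf p x)) + ennreal (indicator S x * pmf p x) \<partial>count_space UNIV)"
    unfolding meas_count
    apply (intro nn_integral_cong)
    subgoal for x
      by (cases "x \<in> S") (simp_all add: assms ennreal_plus[symmetric] del: ennreal_plus)
    done
  also have "\<dots> = ?L + ennreal (measure_pmf.prob p S)"
    unfolding meas_count by (rule nn_integral_add) auto
  finally have e: "ennreal (measure_pmf.prob q S) = ?L + ennreal (measure_pmf.prob p S)" .
  have "?L = (?L + ennreal (measure_pmf.prob p S)) - ennreal (measure_pmf.prob p S)"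
    by (rule ennreal_add_diff_cancel_right[symmetric]) simp
  then have "?L = ennreal (measure_pmf.prob q S) - ennreal (measure_pmf.prob p S)"
    using e by simp
  then show ?thesis by (simp add: ennreal_minus)
qed

lemma meas_map_nn:
  "ennreal (measure_pmf.prob (map_pmf f p) B) = (\<integral>\<^sup>+y. indicator B (f y) \<partial>measure_pmf p)"
proof -
  have "ennreal (measure_pmf.prob (map_pmf f p) B) = emeasure (measure_pmf p) (f -` B)"
    by (simp add: measure_pmf.emeasure_eq_measure)
  also have "\<dots> = (\<integral>\<^sup>+y. indicator (f -` B) y \<partial>measure_pmf p)" by simp
  also have "\<dots> = (\<integral>\<^sup>+y. indicator B (f y) \<partial>measure_pmf p)"
    by (intro nn_integral_cong) (simp add: indicator_vimage)
  finally show ?thesis .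
qed

lemma nn_mix:
  assumes "0 \<le> a" "a \<le> 1"
  shows "(\<integral>\<^sup>+y. f y \<partial>measure_pmf (bind_pmf (bernoulli_pmf a) (\<lambda>b. if b then P else R)))
     = ennreal a * (\<integral>\<^sup>+y. f y \<partial>measure_pmf P) + ennreal (1 - a) * (\<integral>\<^sup>+y. f y \<partial>measure_pmf R)"
  using assms by (simp add: mult.commute)



lemma coupling_tv:
  fixes D :: "'a pmf" and W :: "('a \<times> 'a) pmf" and \<rho> :: "'a \<Rightarrow> 'a \<Rightarrow> ennreal"
  assumes rho0: "\<And>x. \<rho> x x = 0" and cost: "(\<integral>\<^sup>+p. \<rho> (fst p) (snd p) \<partial>measure_pmf W) \<le> 1"
  shows "\<exists>D'\<in>cost_ball_dist \<rho> D. tv_dist D' (map_pmf snd W)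
            \<le> measure_pmf.prob (map_pmf fst W) {x. pmf D x < pmf (map_pmf fst W) x}
              - measure_pmf.prob D {x. pmf D x < pmf (map_pmf fst W) x}"
proof -
  define Q where "Q = map_pmf fst W"
  define A where "A = {x. pmf D x < pmf Q x}"
  define K where "K x = cond_pmf W {p. fst p = x}" for x
  define a where "a x = (if pmf D x < pmf Q x then 1 else if pmf D x = 0 then 0 else pmf Q x / pmf D x)" for x
  have a0: "0 \<le> a x" for x by (simp add: a_def)
  have a1: "a x \<le> 1" for x by (auto simp: a_def not_less pmf_nonneg)
  have aQ: "pmf Q x > 0" if "a x > 0" for x
  proof (cases "pmf D x < pmf Q x")
    case True then show ?thesis using pmf_nonneg[of D x] by linarith
  next
    case False then show ?thesis using that pmf_nonneg[of D x] pmf_nonneg[of Q x]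
      by (auto simp: a_def zero_less_divide_iff split: if_splits)
  qed
  have ii: "pmf D x * a x \<le> pmf Q x" for x
    by (auto simp: a_def not_less pmf_nonneg)
  have iii: "pmf D x * (1 - a x) = indicator (-A) x * (pmf D x - pmf Q x)" for x
  proof -
    have "pmf Q x = 0" if "pmf D x = 0" "\<not> pmf D x < pmf Q x"
      using that pmf_nonneg[of Q x] by linarith
    then show ?thesis by (auto simp: a_def A_def algebra_simps)
  qed
  have iv: "pmf Q x - pmf D x * a x = indicator A x * (pmf Q x - pmf D x)" for x
  proof -
    have "pmf Q x = 0" if "pmf D x = 0" "\<not> pmf D x < pmf Q x"
      using that pmf_nonneg[of Q x] by linarith
    then show ?thesis by (auto simp: a_def A_def algebra_simps)
  qed
  have WK: "bind_pmf Q K = W"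
    unfolding Q_def K_def by (rule bind_cond_fiber)
  have Kset: "fst y = x" if "pmf Q x > 0" "y \<in> set_pmf (K x)" for x y
  proof -
    have "x \<in> set_pmf Q" using that(1) by (simp add: set_pmf_iff)
    then have ne: "set_pmf W \<inter> {p. fst p = x} \<noteq> {}" unfolding Q_def by auto
    show ?thesis using that(2) unfolding K_def set_cond_pmf[OF ne] by auto
  qed
  define g where "g x = (\<lambda>b. if b then K x else return_pmf (x, x))" for x
  define c where "c = bind_pmf D (\<lambda>x. bind_pmf (bernoulli_pmf (a x)) (g x))"
  have mix: "(\<integral>\<^sup>+y. f y \<partial>measure_pmf (bind_pmf (bernoulli_pmf (a x)) (g x)))
     = ennreal (a x) * (\<integral>\<^sup>+y. f y \<partial>measure_pmf (K x)) + ennreal (1 - a x) * f (x, x)" for f x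
    unfolding g_def by (subst nn_mix[OF a0 a1]) simp
  have F1: "map_pmf fst c = D"
  proof -
    have "map_pmf fst (bind_pmf (bernoulli_pmf (a x)) (g x)) = return_pmf x" for x
    proof -
      have "map_pmf fst (bind_pmf (bernoulli_pmf (a x)) (g x))
          = bind_pmf (bernoulli_pmf (a x)) (\<lambda>b. return_pmf x)"
        unfolding map_bind_pmf
      proof (rule bind_pmf_cong[OF refl])
        fix b assume b: "b \<in> set_pmf (bernoulli_pmf (a x))"
        show "map_pmf fst (g x b) = return_pmf x"
        proof (cases b)
          case True
          then have "pmf (bernoulli_pmf (a x)) True \<noteq> 0" using b by (simp add: set_pmf_iff)
          then have "a x > 0" using a0[of x] a1[of x] by auto
          then have "pmf Q x > 0" by (rule aQ)
          then show ?thesis using True Kset[of x] unfolding g_def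
            by (simp add: map_pmf_eq_return_pmf_iff)
        qed (simp add: g_def)
      qed
      then show ?thesis by simp
    qed
    then show ?thesis unfolding c_def map_bind_pmf by (simp add: bind_return_pmf')
  qed
  define I where "I x = (\<integral>\<^sup>+y. \<rho> (fst y) (snd y) \<partial>measure_pmf (K x))" for x
  have F2: "(\<integral>\<^sup>+p. \<rho> (fst p) (snd p) \<partial>measure_pmf c) \<le> 1"
  proof -
    have "(\<integral>\<^sup>+p. \<rho> (fst p) (snd p) \<partial>measure_pmf c) = (\<integral>\<^sup>+x. (\<integral>\<^sup>+p. \<rho> (fst p) (snd p) \<partial>measure_pmf (bind_pmf (bernoulli_pmf (a x)) (g x))) \<partial>measure_pmf D)"
      unfolding c_def by (rule nn_integral_bind_pmf)
    also have "\<dots> = (\<integral>\<^sup>+x. ennreal (a x) * I x \<partial>measure_pmf D)"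
      unfolding mix I_def by (simp add: rho0)
    also have "\<dots> = (\<integral>\<^sup>+x. ennreal (pmf D x) * (ennreal (a x) * I x) \<partial>count_space UNIV)"
      by (rule nn_integral_measure_pmf)
    also have "\<dots> \<le> (\<integral>\<^sup>+x. ennreal (pmf Q x) * I x \<partial>count_space UNIV)"
    proof (rule nn_integral_mono)
      fix x
      have "ennreal (pmf D x) * (ennreal (a x) * I x) = ennreal (pmf D x * a x) * I x"
        by (simp add: ennreal_mult a0 mult.assoc)
      also have "\<dots> \<le> ennreal (pmf Q x) * I x"
        by (intro mult_right_mono ennreal_leI ii) auto
      finally show "ennreal (pmf D x) * (ennreal (a x) * I x) \<le> ennreal (pmf Q x) * I x" .
    qed
    also have "\<dots> = (\<integral>\<^sup>+x. I x \<partial>measure_pmf Q)"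
      by (rule nn_integral_measure_pmf[symmetric])
    also have "\<dots> = (\<integral>\<^sup>+p. \<rho> (fst p) (snd p) \<partial>measure_pmf W)"
      unfolding WK[symmetric] I_def by (rule nn_integral_bind_pmf[symmetric])
    also have "\<dots> \<le> 1" by (rule cost)
    finally show ?thesis .
  qed
  have inball: "map_pmf snd c \<in> cost_ball_dist \<rho> D"
    unfolding cost_ball_dist_def using F1 F2 by blast
  define \<delta> where "\<delta> = measure_pmf.prob Q A - measure_pmf.prob D A"
  have eA: "(\<integral>\<^sup>+x. ennreal (indicator A x * (pmf Q x - pmf D x)) \<partial>count_space UNIV) = ennreal \<delta>"
    unfolding \<delta>_def by (rule count_diff) (auto simp: A_def)
  have eB: "(\<integral>\<^sup>+x. ennreal (indicator (-A) x * (pmf D x - pmf Q x)) \<partial>count_space UNIV) = ennreal \<delta>"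
  proof -
    have "(\<integral>\<^sup>+x. ennreal (indicator (-A) x * (pmf D x - pmf Q x)) \<partial>count_space UNIV)
        = ennreal (measure_pmf.prob D (-A) - measure_pmf.prob Q (-A))"
      by (rule count_diff) (auto simp: A_def)
    also have "measure_pmf.prob D (-A) - measure_pmf.prob Q (-A) = \<delta>"
      using measure_pmf.prob_compl[of A D] measure_pmf.prob_compl[of A Q]
      by (simp add: \<delta>_def Compl_eq_Diff_UNIV)
    finally show ?thesis .
  qed
  have \<delta>0: "\<delta> \<ge> 0"
  proof -
    have "ennreal (measure_pmf.prob D A) \<le> ennreal (measure_pmf.prob Q A)"
      unfolding meas_count by (intro nn_integral_mono ennreal_leI) (auto simp: indicator_def A_def)
    then show ?thesis by (simp add: \<delta>_def ennreal_le_iff)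
  qed
  have bnd: "\<bar>measure_pmf.prob (map_pmf snd c) B - measure_pmf.prob (map_pmf snd W) B\<bar> \<le> \<delta>" for B
  proof -
    define H where "H x = (\<integral>\<^sup>+y. indicator B (snd y) \<partial>measure_pmf (K x))" for x
    have H1: "H x \<le> 1" for x
    proof -
      have "H x \<le> (\<integral>\<^sup>+y. 1 \<partial>measure_pmf (K x))"
        unfolding H_def by (intro nn_integral_mono) (auto simp: indicator_def)
      then show ?thesis by (simp add: measure_pmf.emeasure_space_1)
    qed
    define u where "u = measure_pmf.prob (map_pmf snd c) B"
    define v where "v = measure_pmf.prob (map_pmf snd W) B"
    have U: "ennreal u = (\<integral>\<^sup>+x. ennreal (pmf D x * a x) * H x + ennreal (pmf D x * (1 - a x)) * indicator B x \<partial>count_space UNIV)"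
    proof -
      have "ennreal u = (\<integral>\<^sup>+x. (\<integral>\<^sup>+y. indicator B (snd y) \<partial>measure_pmf (bind_pmf (bernoulli_pmf (a x)) (g x))) \<partial>measure_pmf D)"
        unfolding u_def meas_map_nn c_def by (rule nn_integral_bind_pmf)
      also have "\<dots> = (\<integral>\<^sup>+x. ennreal (a x) * H x + ennreal (1 - a x) * indicator B x \<partial>measure_pmf D)"
        unfolding mix H_def by simp
      also have "\<dots> = (\<integral>\<^sup>+x. ennreal (pmf D x) * (ennreal (a x) * H x + ennreal (1 - a x) * indicator B x) \<partial>count_space UNIV)"
        by (rule nn_integral_measure_pmf)
      also have "\<dots> = (\<integral>\<^sup>+x. ennreal (pmf D x * a x) * H x + ennreal (pmf D x * (1 - a x)) * indicator B x \<partial>count_space UNIV)"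
        apply (intro nn_integral_cong)
        subgoal for x using a0[of x] a1[of x]
          by (simp add: ennreal_mult distrib_left mult.assoc del: ennreal_plus)
        done
      finally show ?thesis .
    qed
    have V: "ennreal v = (\<integral>\<^sup>+x. ennreal (pmf Q x) * H x \<partial>count_space UNIV)"
    proof -
      have "ennreal v = (\<integral>\<^sup>+x. H x \<partial>measure_pmf Q)"
        unfolding v_def meas_map_nn WK[symmetric] H_def by (rule nn_integral_bind_pmf)
      also have "\<dots> = (\<integral>\<^sup>+x. ennreal (pmf Q x) * H x \<partial>count_space UNIV)"
        by (rule nn_integral_measure_pmf)
      finally show ?thesis .
    qed
    have b1: "ennreal u \<le> ennreal v + ennreal \<delta>"
    proof -
      have "ennreal u \<le> (\<integral>\<^sup>+x. ennreal (pmf Q x) * H x + ennreal (indicator (-A) x * (pmf D x - pmf Q x)) \<partial>count_space UNIV)"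
        unfolding U
      proof (intro nn_integral_mono add_mono)
        fix x
        show "ennreal (pmf D x * a x) * H x \<le> ennreal (pmf Q x) * H x"
          by (intro mult_right_mono ennreal_leI ii) auto
        have "ennreal (pmf D x * (1 - a x)) * indicator B x \<le> ennreal (pmf D x * (1 - a x)) * 1"
          by (intro mult_left_mono) (auto simp: indicator_def)
        then show "ennreal (pmf D x * (1 - a x)) * indicator B x \<le> ennreal (indicator (- A) x * (pmf D x - pmf Q x))"
          by (simp add: iii)
      qed
      also have "\<dots> = ennreal v + ennreal \<delta>"
        unfolding V eB[symmetric] by (rule nn_integral_add) auto
      finally show ?thesis .
    qed
    have b2: "ennreal v \<le> ennreal u + ennreal \<delta>"
    proof -
      have "ennreal v = (\<integral>\<^sup>+x. ennreal (pmf D x * a x) * H x + ennreal (pmf Q x - pmf D x * a x) * H x \<partial>count_space UNIV)"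
        unfolding V
        apply (intro nn_integral_cong)
        subgoal for x using ii[of x] a0[of x]
          by (simp add: distrib_right[symmetric] ennreal_plus[symmetric] del: ennreal_plus)
        done
      also have "\<dots> \<le> (\<integral>\<^sup>+x. (ennreal (pmf D x * a x) * H x + ennreal (pmf D x * (1 - a x)) * indicator B x)
                        + ennreal (indicator A x * (pmf Q x - pmf D x)) \<partial>count_space UNIV)"
      proof (intro nn_integral_mono add_mono)
        fix x
        show "ennreal (pmf D x * a x) * H x \<le> ennreal (pmf D x * a x) * H x + ennreal (pmf D x * (1 - a x)) * indicator B x"
          by simp
        have "ennreal (pmf Q x - pmf D x * a x) * H x \<le> ennreal (pmf Q x - pmf D x * a x) * 1"
          by (intro mult_left_mono H1) auto
        then show "ennreal (pmf Q x - pmf D x * a x) * H x \<le> ennreal (indicator A x * (pmf Q x - pmf D x))"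
          by (simp add: iv)
      qed
      also have "\<dots> = ennreal u + ennreal \<delta>"
        unfolding U eA[symmetric] by (rule nn_integral_add) auto
      finally show ?thesis .
    qed
    have u0: "u \<ge> 0" "v \<ge> 0" unfolding u_def v_def by auto
    have "ennreal v + ennreal \<delta> = ennreal (v + \<delta>)" by (rule ennreal_plus[symmetric, OF u0(2) \<delta>0])
    with b1 have "ennreal u \<le> ennreal (v + \<delta>)" by simp
    then have "u \<le> v + \<delta>" using u0 \<delta>0 by (subst (asm) ennreal_le_iff) auto
    moreover have "ennreal u + ennreal \<delta> = ennreal (u + \<delta>)" by (rule ennreal_plus[symmetric, OF u0(1) \<delta>0])
    with b2 have "ennreal v \<le> ennreal (u + \<delta>)" by simp
    then have "v \<le> u + \<delta>" using u0 \<delta>0 by (subst (asm) ennreal_le_iff) auto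
    ultimately show ?thesis unfolding u_def v_def by linarith
  qed
  have "tv_dist (map_pmf snd c) (map_pmf snd W) \<le> \<delta>"
    unfolding tv_dist_def by (rule cSUP_least) (use bnd in auto)
  then show ?thesis using inball unfolding \<delta>_def Q_def A_def by blast
qed



lemma unif_Zf:
  assumes "length s = m" "m > 0"
  shows "measure_pmf.prob (unif_coord s) B - measure_pmf.prob D B = Zf D m B s"
proof -
  have "measure_pmf.prob (unif_coord s) B = measure_pmf.expectation (pmf_of_set {..<length s}) (indicator ((\<lambda>i. s!i) -` B))"
    by (simp add: unif_coord_def)
  also have "\<dots> = (\<Sum>i<length s. indicator B (s!i)) / length s"
    using assms by (subst integral_pmf_of_set) (auto simp: indicator_vimage)
  finally have 1: "measure_pmf.prob (unif_coord s) B = (\<Sum>i<m. indicator B (s!i)) / m" using assms by simp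
  have 2: "Zf D m B s = ((\<Sum>i<m. indicator B (s!i)) - m * measure_pmf.prob D B) / m"
    unfolding Zf_def sum_list_sum_nth using assms by (simp add: sum_subtractf atLeast0LessThan)
  show ?thesis unfolding 1 2 using assms by (simp add: field_simps)
qed

lemma measure_bind_pmf_exp:
  "measure_pmf.prob (bind_pmf p f) B = measure_pmf.expectation p (\<lambda>x. measure_pmf.prob (f x) B)"
proof -
  have "measure_pmf.prob (bind_pmf p f) B = measure_pmf.expectation (bind_pmf p f) (indicator B)" by simp
  also have "\<dots> = measure_pmf.expectation p (\<lambda>x. measure_pmf.expectation (f x) (indicator B))"
    by (rule integral_bind_pmf_bounded[where B=1]) (auto simp: indicator_def)
  finally show ?thesis by simp
qed

lemma tv_dist_nonneg: "tv_dist P Q \<ge> 0"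
proof -
  have b1: "\<bar>measure_pmf.prob P A - measure_pmf.prob Q A\<bar> \<le> 1" for A
    unfolding abs_le_iff using measure_pmf.prob_le_1[of P A] measure_pmf.prob_le_1[of Q A]
      measure_nonneg[of "measure_pmf P" A] measure_nonneg[of "measure_pmf Q" A]
    by linarith
  have bdd: "bdd_above (range (\<lambda>A. \<bar>measure_pmf.prob P A - measure_pmf.prob Q A\<bar>))"
    by (rule bdd_aboveI[where M=1]) (use b1 in auto)
  have "\<bar>measure_pmf.prob P {} - measure_pmf.prob Q {}\<bar> \<le> tv_dist P Q"
    unfolding tv_dist_def by (rule cSUP_upper[OF _ bdd]) auto
  then show ?thesis by simp
qed



theorem mainTheorem6:
  fixes D :: "'a::countable pmf" and m :: nat and \<rho> :: "'a \<Rightarrow> 'a \<Rightarrow> ennreal"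
    and \<mu> :: "'a list pmf" and J :: "('a list \<times> 'g) pmf" and G :: "'g set"
  assumes "m \<ge> 1"
    and "cost_fun \<rho>"
    and "\<mu> \<in> adaptive_class m \<rho> D"
    and "map_pmf fst J = \<mu>"
    and "finite G" and "G \<noteq> {}"
    and "set_pmf (map_pmf snd J) \<subseteq> G"
  shows "measure_pmf.expectation (map_pmf snd J)
           (\<lambda>g0. INF D' \<in> cost_ball_dist \<rho> D. tv_dist D' (goal_dist J g0))
         \<le> sqrt (ln (real (card G)) / (2 * real m))"
proof -
  have m0: "m > 0" using assms(1) by simp
  from assms(3) obtain \<nu> where nu1: "map_pmf fst \<nu> = \<mu>" and nu2: "map_pmf snd \<nu> = replicate_pmf m D"
    and nu3: "\<forall>p\<in>set_pmf \<nu>. fst p \<in> cost_ball_tuple \<rho> (snd p)"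
    unfolding adaptive_class_def by blast
  have rho0: "\<And>x. \<rho> x x = 0" using assms(2) unfolding cost_fun_def by blast
  define R where "R = replicate_pmf m D"
  define Kn where "Kn s' = map_pmf snd (cond_pmf \<nu> {p. fst p = s'})" for s'
  define T where "T = bind_pmf J (\<lambda>j. map_pmf (\<lambda>s. ((fst j, s), snd j)) (Kn (fst j)))"
  have T1: "map_pmf (\<lambda>t. (fst (fst t), snd t)) T = J"
    unfolding T_def map_bind_pmf map_pmf_comp by (simp add: bind_return_pmf')
  have setT: "(fst (fst t), snd (fst t)) \<in> set_pmf \<nu> \<and> snd t \<in> set_pmf (map_pmf snd J)"
    if "t \<in> set_pmf T" for t
  proof -
    from that obtain j s where j: "j \<in> set_pmf J" and s: "s \<in> set_pmf (Kn (fst j))"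
      and t: "t = ((fst j, s), snd j)"
      unfolding T_def by auto
    have "fst j \<in> set_pmf (map_pmf fst J)" using j by auto
    then have "fst j \<in> set_pmf (map_pmf fst \<nu>)" using assms(4) nu1 by simp
    then have ne: "set_pmf \<nu> \<inter> {p. fst p = fst j} \<noteq> {}" by auto
    from s have "s \<in> snd ` (set_pmf \<nu> \<inter> {p. fst p = fst j})"
      unfolding Kn_def by (simp add: set_cond_pmf[OF ne])
    then have "(fst j, s) \<in> set_pmf \<nu>" by auto
    then show ?thesis using t j by auto
  qed
  have T3: "map_pmf (\<lambda>t. snd (fst t)) T = R"
  proof -
    have "map_pmf (\<lambda>t. snd (fst t)) T = bind_pmf J (\<lambda>j. Kn (fst j))"
      unfolding T_def map_bind_pmf map_pmf_comp by simp
    also have "\<dots> = bind_pmf \<mu> Kn"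
      unfolding assms(4)[symmetric] bind_map_pmf ..
    also have "\<dots> = map_pmf snd (bind_pmf (map_pmf fst \<nu>) (\<lambda>s'. cond_pmf \<nu> {p. fst p = s'}))"
      unfolding Kn_def nu1 map_bind_pmf ..
    also have "\<dots> = R" unfolding bind_cond_fiber nu2 R_def ..
    finally show ?thesis .
  qed
  have lenR: "length s = m" if "s \<in> set_pmf R" for s
    using that by (simp add: R_def set_replicate_pmf)
  have lenT: "length (snd (fst t)) = m \<and> length (fst (fst t)) = m \<and>
      (1 / of_nat m) * (\<Sum>i<m. \<rho> (snd (fst t) ! i) (fst (fst t) ! i)) \<le> 1"
    if "t \<in> set_pmf T" for t
  proof -
    have p: "(fst (fst t), snd (fst t)) \<in> set_pmf \<nu>" using setT[OF that] by blast
    have "snd (fst t) \<in> set_pmf (map_pmf snd \<nu>)" using p by force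
    then have l: "length (snd (fst t)) = m" using lenR nu2 R_def by simp
    have "fst (fst t) \<in> cost_ball_tuple \<rho> (snd (fst t))" using nu3 p by force
    then show ?thesis using l unfolding cost_ball_tuple_def by simp
  qed
  have snd_T: "map_pmf snd T = map_pmf snd J"
  proof -
    have "map_pmf snd J = map_pmf snd (map_pmf (\<lambda>t. (fst (fst t), snd t)) T)" using T1 by simp
    then show ?thesis by (simp add: map_pmf_comp)
  qed
  define CT where "CT g = cond_pmf T {t. snd t = g}" for g
  define Qg where "Qg g = bind_pmf (CT g) (\<lambda>t. unif_coord (snd (fst t)))" for g
  define Ag where "Ag g = {x. pmf D x < pmf (Qg g) x}" for g
  define \<delta> where "\<delta> g = measure_pmf.prob (Qg g) (Ag g) - measure_pmf.prob D (Ag g)" for g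
  have neT: "set_pmf T \<inter> {t. snd t = g} \<noteq> {}" if "g \<in> set_pmf (map_pmf snd J)" for g
    using that unfolding snd_T[symmetric] by auto
  have setCT: "set_pmf (CT g) = set_pmf T \<inter> {t. snd t = g}" if "g \<in> set_pmf (map_pmf snd J)" for g
    unfolding CT_def by (rule set_cond_pmf[OF neT[OF that]])
  have step1: "(INF D'\<in>cost_ball_dist \<rho> D. tv_dist D' (goal_dist J g)) \<le> \<delta> g \<and>
               0 \<le> (INF D'\<in>cost_ball_dist \<rho> D. tv_dist D' (goal_dist J g))"
    if g: "g \<in> set_pmf (map_pmf snd J)" for g
  proof -
    define W where "W = bind_pmf (CT g) (\<lambda>t. map_pmf (\<lambda>i. (snd (fst t) ! i, fst (fst t) ! i)) (pmf_of_set {..<m}))"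
    have W1: "map_pmf fst W = Qg g"
      unfolding W_def Qg_def map_bind_pmf map_pmf_comp
    proof (rule bind_pmf_cong[OF refl])
      fix t assume "t \<in> set_pmf (CT g)"
      then have "length (snd (fst t)) = m" using lenT setCT[OF g] by blast
      then show "map_pmf (\<lambda>x. fst (snd (fst t) ! x, fst (fst t) ! x)) (pmf_of_set {..<m}) = unif_coord (snd (fst t))"
        by (simp add: unif_coord_def)
    qed
    have W2: "map_pmf snd W = goal_dist J g"
    proof -
      let ?f = "\<lambda>t. (fst (fst t), snd t)"
      have vim: "?f -` {p. snd p = g} = {t. snd t = g}" by auto
      have "cond_pmf J {p. snd p = g} = cond_pmf (map_pmf ?f T) {p. snd p = g}" using T1 by simp
      also have "\<dots> = map_pmf ?f (CT g)"
        unfolding CT_def by (subst cond_map_pmf) (use neT[OF g] vim in auto)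
      finally have cJ: "cond_pmf J {p. snd p = g} = map_pmf ?f (CT g)" .
      have "goal_dist J g = bind_pmf (CT g) (\<lambda>t. unif_coord (fst (fst t)))"
        unfolding goal_dist_def cJ bind_map_pmf by simp
      also have "\<dots> = map_pmf snd W"
        unfolding W_def map_bind_pmf map_pmf_comp
      proof (rule bind_pmf_cong[OF refl])
        fix t assume "t \<in> set_pmf (CT g)"
        then have "length (fst (fst t)) = m" using lenT setCT[OF g] by blast
        then show "unif_coord (fst (fst t)) = map_pmf (\<lambda>x. snd (snd (fst t) ! x, fst (fst t) ! x)) (pmf_of_set {..<m})"
          by (simp add: unif_coord_def)
      qed
      finally show ?thesis by simp
    qed
    have W3: "(\<integral>\<^sup>+p. \<rho> (fst p) (snd p) \<partial>measure_pmf W) \<le> 1"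
    proof -
      have "(\<integral>\<^sup>+p. \<rho> (fst p) (snd p) \<partial>measure_pmf W)
          = (\<integral>\<^sup>+t. (\<Sum>i<m. \<rho> (snd (fst t) ! i) (fst (fst t) ! i)) / of_nat m \<partial>measure_pmf (CT g))"
      proof -
        have u: "nn_integral (measure_pmf (pmf_of_set {..<m})) h = sum h {..<m} / of_nat m" for h :: "nat \<Rightarrow> ennreal"
          using nn_integral_pmf_of_set[of "{..<m}" h] m0 by (simp add: lessThan_empty_iff)
        show ?thesis unfolding W_def by (simp add: u)
      qed
      also have "\<dots> \<le> (\<integral>\<^sup>+t. 1 \<partial>measure_pmf (CT g))"
      proof (rule nn_integral_mono_AE)
        show "AE t in measure_pmf (CT g). (\<Sum>i<m. \<rho> (snd (fst t) ! i) (fst (fst t) ! i)) / of_nat m \<le> 1"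
          unfolding AE_measure_pmf_iff
        proof
          fix t assume "t \<in> set_pmf (CT g)"
          then have "(1 / of_nat m) * (\<Sum>i<m. \<rho> (snd (fst t) ! i) (fst (fst t) ! i)) \<le> 1"
            using lenT setCT[OF g] by blast
          then show "(\<Sum>i<m. \<rho> (snd (fst t) ! i) (fst (fst t) ! i)) / of_nat m \<le> 1"
            by (simp add: divide_ennreal_def mult.commute)
        qed
      qed
      also have "\<dots> = 1" by (simp add: measure_pmf.emeasure_space_1)
      finally show ?thesis .
    qed
    obtain D' where D': "D' \<in> cost_ball_dist \<rho> D"
      and tv: "tv_dist D' (map_pmf snd W) \<le> measure_pmf.prob (map_pmf fst W) {x. pmf D x < pmf (map_pmf fst W) x}
              - measure_pmf.prob D {x. pmf D x < pmf (map_pmf fst W) x}"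
      using coupling_tv[OF rho0 W3] by blast
    have tv': "tv_dist D' (goal_dist J g) \<le> \<delta> g"
      using tv unfolding W1 W2 \<delta>_def Ag_def .
    have bdd: "bdd_below ((\<lambda>D'. tv_dist D' (goal_dist J g)) ` cost_ball_dist \<rho> D)"
      by (rule bdd_belowI[where m=0]) (auto simp: tv_dist_nonneg)
    have "(INF D'\<in>cost_ball_dist \<rho> D. tv_dist D' (goal_dist J g)) \<le> tv_dist D' (goal_dist J g)"
      by (rule cINF_lower[OF bdd D'])
    moreover have "0 \<le> (INF D'\<in>cost_ball_dist \<rho> D. tv_dist D' (goal_dist J g))"
      using D' by (intro cINF_greatest) (auto simp: tv_dist_nonneg)
    ultimately show ?thesis using tv' by linarith
  qed
  have \<delta>b: "\<bar>\<delta> g\<bar> \<le> 1" for g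
    unfolding \<delta>_def abs_le_iff
    using measure_pmf.prob_le_1[of "Qg g" "Ag g"] measure_pmf.prob_le_1[of D "Ag g"]
      measure_nonneg[of "measure_pmf (Qg g)" "Ag g"] measure_nonneg[of "measure_pmf D" "Ag g"]
    by linarith
  define F :: "(('a list \<times> 'a list) \<times> 'g) \<Rightarrow> real" where "F t = (if length (snd (fst t)) = m then Zf D m (Ag (snd t)) (snd (fst t)) else 0)" for t
  have Fb: "\<bar>F t\<bar> \<le> 1" for t
    unfolding F_def using Zf_bound[OF _ m0] by auto
  have \<delta>F: "\<delta> g = measure_pmf.expectation (CT g) F" if g: "g \<in> set_pmf (map_pmf snd J)" for g
  proof -
    have "measure_pmf.prob (Qg g) (Ag g) = measure_pmf.expectation (CT g) (\<lambda>t. measure_pmf.prob (unif_coord (snd (fst t))) (Ag g))"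
      unfolding Qg_def by (rule measure_bind_pmf_exp)
    then have "\<delta> g = measure_pmf.expectation (CT g) (\<lambda>t. measure_pmf.prob (unif_coord (snd (fst t))) (Ag g))
                 - measure_pmf.expectation (CT g) (\<lambda>t. measure_pmf.prob D (Ag g))"
      unfolding \<delta>_def by simp
    also have "\<dots> = measure_pmf.expectation (CT g) (\<lambda>t. measure_pmf.prob (unif_coord (snd (fst t))) (Ag g) - measure_pmf.prob D (Ag g))"
      by (rule Bochner_Integration.integral_diff[symmetric])
         (auto intro!: pmf_integrable_bounded[where B=1])
    also have "\<dots> = measure_pmf.expectation (CT g) F"
    proof (rule integral_cong_AE)
      show "AE t in measure_pmf (CT g). measure_pmf.prob (unif_coord (snd (fst t))) (Ag g) - measure_pmf.prob D (Ag g) = F t"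
        unfolding AE_measure_pmf_iff
      proof
        fix t assume "t \<in> set_pmf (CT g)"
        then have "t \<in> set_pmf T" "snd t = g" using setCT[OF g] by auto
        moreover have "length (snd (fst t)) = m" using lenT calculation(1) by blast
        ultimately show "measure_pmf.prob (unif_coord (snd (fst t))) (Ag g) - measure_pmf.prob D (Ag g) = F t"
          unfolding F_def using unif_Zf[OF _ m0] by simp
      qed
    qed auto
    finally show ?thesis .
  qed
  define Mx where "Mx s = Max ((\<lambda>h. Zf D m (Ag h) s) ` G)" for s
  have step2: "measure_pmf.expectation (map_pmf snd J) \<delta> \<le> sqrt (ln (real (card G)) / (2 * real m))"
  proof -
    have "measure_pmf.expectation (map_pmf snd J) \<delta>
        = measure_pmf.expectation (map_pmf snd T) (\<lambda>g. measure_pmf.expectation (CT g) F)"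
      unfolding snd_T by (rule integral_cong_AE) (auto simp: AE_measure_pmf_iff \<delta>F)
    also have "\<dots> = measure_pmf.expectation (bind_pmf (map_pmf snd T) CT) F"
      by (rule integral_bind_pmf_bounded[symmetric, where B=1]) (rule Fb)
    also have "bind_pmf (map_pmf snd T) CT = T"
      unfolding CT_def by (rule bind_cond_fiber)
    also have "measure_pmf.expectation T F \<le> measure_pmf.expectation T (\<lambda>t. Mx (snd (fst t)))"
    proof (rule integral_mono_AE)
      show "integrable (measure_pmf T) F" by (rule pmf_integrable_bounded[where B=1]) (rule Fb)
      show "integrable (measure_pmf T) (\<lambda>t. Mx (snd (fst t)))"
      proof (rule pmf_integrable_bounded[where B=1])
        fix t assume t: "t \<in> set_pmf T"
        have "Mx (snd (fst t)) \<in> (\<lambda>h. Zf D m (Ag h) (snd (fst t))) ` G"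
          unfolding Mx_def using assms(5,6) by (intro Max_in) auto
        then obtain h where "Mx (snd (fst t)) = Zf D m (Ag h) (snd (fst t))" by blast
        moreover have "length (snd (fst t)) = m" using lenT[OF t] by blast
        ultimately show "\<bar>Mx (snd (fst t))\<bar> \<le> 1" using Zf_bound[OF _ m0] by simp
      qed
      show "AE t in measure_pmf T. F t \<le> Mx (snd (fst t))"
        unfolding AE_measure_pmf_iff
      proof
        fix t assume t: "t \<in> set_pmf T"
        have "snd t \<in> G" using setT[OF t] assms(7) by blast
        then show "F t \<le> Mx (snd (fst t))"
          unfolding F_def Mx_def using lenT[OF t] assms(5) by (auto intro!: Max_ge)
      qed
    qed
    also have "measure_pmf.expectation T (\<lambda>t. Mx (snd (fst t))) = measure_pmf.expectation R Mx"
      unfolding T3[symmetric] by simp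
    also have "\<dots> \<le> sqrt (ln (real (card G)) / (2 * real m))"
    proof (rule opt_lambda)
      show "0 \<le> ln (real (card G))" using assms(5,6) by (simp add: Suc_leI card_gt_0_iff)
      show "0 < real m" using m0 by simp
      fix l :: real assume "l > 0"
      then have "measure_pmf.expectation R Mx \<le> ln (real (card G)) / l + l / (8 * m)"
        unfolding R_def Mx_def using max_bound[OF assms(5,6) _ m0] by blast
      then show "measure_pmf.expectation R Mx \<le> ln (real (card G)) / l + l / (8 * real m)"
        by simp
    qed
    finally show ?thesis .
  qed
  have "measure_pmf.expectation (map_pmf snd J)
           (\<lambda>g0. INF D' \<in> cost_ball_dist \<rho> D. tv_dist D' (goal_dist J g0))
        \<le> measure_pmf.expectation (map_pmf snd J) \<delta>"
  proof (rule integral_mono_AE')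
    show "integrable (measure_pmf (map_pmf snd J)) \<delta>"
      by (rule pmf_integrable_bounded[where B=1]) (rule \<delta>b)
    show "AE g in measure_pmf (map_pmf snd J). (INF D'\<in>cost_ball_dist \<rho> D. tv_dist D' (goal_dist J g)) \<le> \<delta> g"
      unfolding AE_measure_pmf_iff using step1 by blast
    show "AE g in measure_pmf (map_pmf snd J). 0 \<le> \<delta> g"
      unfolding AE_measure_pmf_iff using step1 by fastforce
  qed
  then show ?thesis using step2 by linarith
qed


end
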